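(* Let $\mathbbm{k}$ be a field and $n\ge 2$. The ideal $J_n\subset R$ is a mesoprime binomial ideal whose associated lattice is $L'_n$; that is, \[J_n=\langle x^{u^+}-x^{u^-} : u\in L'_n\rangle,\] so that $R/J_n$ is the group-algebra-type quotient attached to $L'_n$ (the lattice ideal of $L'_n$).
   Context: $R=\mathbbm{k}[x_{ij}:1\le i\le j\le n]$ with the convention $x_{ij}=x_{ji}$; exponent vectors live in $\mathbb{N}^{\binom{n+1}{2}}$ with standard basis $e_{ij}$ ($e_{ij}=e_{ji}$). For $u\in\mathbb{Z}^{\binom{n+1}{2}}$, $u=u^+-u^-$ with $u^+,u^-\ge 0$ of disjoint support. $J_n$ is the ideal generated by all principal $2$-minors $x_{ii}x_{jj}-x_{ij}^2$ ($i,j\in[n]$) of the symmetric matrix $(x_{ij})$. For $i,j,k,l\in[n]$, $[ij|kl]:=e_{ik}+e_{jl}-e_{il}-e_{jk}$, and $L'_n$ is the lattice generated by the $[ij|ij]$, $i,j\in[n]$. (A mesoprime binomial ideal without monomials, in the sense of Kahle–Miller, with associated lattice $L$ and trivial character is exactly the lattice ideal $\langle x^{u^+}-x^{u^-}:u\in L\rangle$.) *)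

theory Defs
  imports "HOL-Library.Poly_Mapping"
begin

text \<open>Variables x_ij (1 <= i <= j <= n) are indexed by the canonical pair (min i j, max i j),
  which realises the convention x_ij = x_ji.\<close>

type_synonym 'k mpoly = "((nat \<times> nat) \<Rightarrow>\<^sub>0 nat) \<Rightarrow>\<^sub>0 'k"

definition cpair :: "nat \<Rightarrow> nat \<Rightarrow> nat \<times> nat" where
  "cpair i j = (min i j, max i j)"

definition Idx :: "nat \<Rightarrow> (nat \<times> nat) set" where
  "Idx n = {(i, j). 1 \<le> i \<and> i \<le> j \<and> j \<le> n}"

definition Rn :: "nat \<Rightarrow> 'k::field mpoly set" where
  "Rn n = {p. \<forall>a \<in> Poly_Mapping.keys p. Poly_Mapping.keys a \<subseteq> Idx n}"

definition var :: "nat \<Rightarrow> nat \<Rightarrow> 'k::field mpoly" where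
  "var i j = Poly_Mapping.single (Poly_Mapping.single (cpair i j) 1) 1"

definition monom :: "((nat \<times> nat) \<Rightarrow>\<^sub>0 nat) \<Rightarrow> 'k::field mpoly" where
  "monom a = Poly_Mapping.single a 1"

definition ideal_gen :: "'a::comm_ring_1 set \<Rightarrow> 'a set \<Rightarrow> 'a set" where
  "ideal_gen A G = {(\<Sum>g\<in>F. c g * g) | F c. finite F \<and> F \<subseteq> G \<and> (\<forall>g\<in>F. c g \<in> A)}"

definition Jn :: "nat \<Rightarrow> 'k::field mpoly set" where
  "Jn n = ideal_gen (Rn n)
     {var i i * var j j - var i j ^ 2 | i j. i \<in> {1..n} \<and> j \<in> {1..n}}"

text \<open>Integer vectors in Z^(n+1 choose 2), as functions on index pairs.\<close>
definition evec :: "nat \<Rightarrow> nat \<Rightarrow> (nat \<times> nat) \<Rightarrow> int" where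
  "evec i j = (\<lambda>p. if p = cpair i j then 1 else 0)"

definition bracket :: "nat \<Rightarrow> nat \<Rightarrow> nat \<Rightarrow> nat \<Rightarrow> (nat \<times> nat) \<Rightarrow> int" where
  "bracket i j k l = (\<lambda>p. evec i k p + evec j l p - evec i l p - evec j k p)"

definition Lprime :: "nat \<Rightarrow> ((nat \<times> nat) \<Rightarrow> int) set" where
  "Lprime n = {(\<lambda>p. \<Sum>q\<in>{1..n} \<times> {1..n}. c q * bracket (fst q) (snd q) (fst q) (snd q) p)
               | c :: nat \<times> nat \<Rightarrow> int. True}"

definition posp :: "((nat \<times> nat) \<Rightarrow> int) \<Rightarrow> (nat \<times> nat) \<Rightarrow>\<^sub>0 nat" where
  "posp u = Abs_poly_mapping (\<lambda>p. nat (u p))"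

definition negp :: "((nat \<times> nat) \<Rightarrow> int) \<Rightarrow> (nat \<times> nat) \<Rightarrow>\<^sub>0 nat" where
  "negp u = Abs_poly_mapping (\<lambda>p. nat (- u p))"

text \<open>Lattice ideal of a lattice L (mesoprime binomial ideal with lattice L, trivial character).\<close>
definition lattice_ideal :: "nat \<Rightarrow> ((nat \<times> nat) \<Rightarrow> int) set \<Rightarrow> 'k::field mpoly set" where
  "lattice_ideal n L = ideal_gen (Rn n) {monom (posp u) - monom (negp u) | u. u \<in> L}"

end

theory Submission
  imports Defs
begin


locale subr =
  fixes A :: "'a::comm_ring_1 set"
  assumes zA: "0 \<in> A" and oA: "1 \<in> A" and addA: "\<And>x y. x \<in> A \<Longrightarrow> y \<in> A \<Longrightarrow> x + y \<in> A"
    and mulA: "\<And>x y. x \<in> A \<Longrightarrow> y \<in> A \<Longrightarrow> x * y \<in> A"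
    and negA: "\<And>x. x \<in> A \<Longrightarrow> - x \<in> A"
begin

lemma ig_intro: "finite F \<Longrightarrow> F \<subseteq> G \<Longrightarrow> \<forall>g\<in>F. c g \<in> A \<Longrightarrow> (\<Sum>g\<in>F. c g * g) \<in> ideal_gen A G"
  unfolding ideal_gen_def apply (rule CollectI) apply (rule exI[of _ F]) apply (rule exI[of _ c]) by simp

lemma ig_zero: "0 \<in> ideal_gen A G"
  unfolding ideal_gen_def by (rule CollectI, rule exI[of _ "{}"], auto)

lemma ig_gen: "g \<in> G \<Longrightarrow> g \<in> ideal_gen A G"
  unfolding ideal_gen_def
  by (rule CollectI, rule exI[of _ "{g}"], rule exI[of _ "\<lambda>_. 1"], auto simp: oA)

lemma ig_add: assumes "x \<in> ideal_gen A G" "y \<in> ideal_gen A G" shows "x + y \<in> ideal_gen A G"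
proof -
  obtain F1 c1 where 1: "x = (\<Sum>g\<in>F1. c1 g * g)" "finite F1" "F1 \<subseteq> G" "\<forall>g\<in>F1. c1 g \<in> A"
    using assms(1) unfolding ideal_gen_def by blast
  obtain F2 c2 where 2: "y = (\<Sum>g\<in>F2. c2 g * g)" "finite F2" "F2 \<subseteq> G" "\<forall>g\<in>F2. c2 g \<in> A"
    using assms(2) unfolding ideal_gen_def by blast
  define d1 where "d1 g = (if g \<in> F1 then c1 g else 0)" for g
  define d2 where "d2 g = (if g \<in> F2 then c2 g else 0)" for g
  have x: "x = (\<Sum>g\<in>F1\<union>F2. d1 g * g)"
    unfolding 1(1) d1_def by (rule sum.mono_neutral_cong_left) (use 1 2 in auto)
  have y: "y = (\<Sum>g\<in>F1\<union>F2. d2 g * g)"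
    unfolding 2(1) d2_def by (rule sum.mono_neutral_cong_left) (use 1 2 in auto)
  have eq: "x + y = (\<Sum>g\<in>F1\<union>F2. (d1 g + d2 g) * g)"
    unfolding x y by (simp add: sum.distrib distrib_right)
  have "\<forall>g\<in>F1\<union>F2. d1 g + d2 g \<in> A"
    using 1 2 by (auto simp: d1_def d2_def intro!: addA zA)
  moreover have "finite (F1 \<union> F2)" "F1 \<union> F2 \<subseteq> G" using 1 2 by auto
  ultimately show ?thesis unfolding eq by (intro ig_intro[of "F1 \<union> F2" G "\<lambda>g. d1 g + d2 g"])
qed

lemma ig_mul: assumes "r \<in> A" "x \<in> ideal_gen A G" shows "r * x \<in> ideal_gen A G"
proof -
  obtain F1 c1 where 1: "x = (\<Sum>g\<in>F1. c1 g * g)" "finite F1" "F1 \<subseteq> G" "\<forall>g\<in>F1. c1 g \<in> A"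
    using assms(2) unfolding ideal_gen_def by blast
  have eq: "r * x = (\<Sum>g\<in>F1. (r * c1 g) * g)" unfolding 1(1) by (simp add: sum_distrib_left mult.assoc)
  have "\<forall>g\<in>F1. r * c1 g \<in> A" using 1 assms(1) by (auto intro: mulA)
  then show ?thesis unfolding eq using 1(2,3) by (intro ig_intro[of F1 G "\<lambda>g. r * c1 g"])
qed

lemma ig_neg: "x \<in> ideal_gen A G \<Longrightarrow> - x \<in> ideal_gen A G"
  using ig_mul[OF negA[OF oA], of x] by (simp only: mult_minus1)

lemma ig_diff: "x \<in> ideal_gen A G \<Longrightarrow> y \<in> ideal_gen A G \<Longrightarrow> x - y \<in> ideal_gen A G"
  unfolding diff_conv_add_uminus by (intro ig_add ig_neg)

lemma ig_sub: assumes "G \<subseteq> ideal_gen A H" shows "ideal_gen A G \<subseteq> ideal_gen A H"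
proof
  fix x assume "x \<in> ideal_gen A G"
  then obtain F1 c1 where 1: "x = (\<Sum>g\<in>F1. c1 g * g)" "finite F1" "F1 \<subseteq> G" "\<forall>g\<in>F1. c1 g \<in> A"
    unfolding ideal_gen_def by blast
  have "F1 \<subseteq> G \<longrightarrow> (\<forall>g\<in>F1. c1 g \<in> A) \<longrightarrow> (\<Sum>g\<in>F1. c1 g * g) \<in> ideal_gen A H"
    using 1(2)
  proof (induction F1 rule: finite_induct)
    case empty
    then show ?case using ig_zero by simp
  next
    case (insert a F)
    show ?case
    proof (intro impI)
      assume h: "insert a F \<subseteq> G" "\<forall>g\<in>insert a F. c1 g \<in> A"
      have "a \<in> ideal_gen A H" using h(1) assms by blast
      then have "c1 a * a \<in> ideal_gen A H" using h(2) by (intro ig_mul) auto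
      moreover have "(\<Sum>g\<in>F. c1 g * g) \<in> ideal_gen A H" using insert.IH h by blast
      ultimately show "(\<Sum>g\<in>insert a F. c1 g * g) \<in> ideal_gen A H"
        using insert.hyps by (simp add: ig_add)
    qed
  qed
  then show "x \<in> ideal_gen A H" using 1 by blast
qed
end



lemma Rn_add: "x \<in> Rn n \<Longrightarrow> y \<in> Rn n \<Longrightarrow> x + y \<in> Rn n"
  using keys_add[of x y] unfolding Rn_def by blast

lemma Rn_mul: assumes x: "x \<in> Rn n" and y: "y \<in> Rn n" shows "(x::'k::field mpoly) * y \<in> Rn n"
  unfolding Rn_def
proof (rule CollectI, rule ballI)
  fix a :: "(nat \<times> nat) \<Rightarrow>\<^sub>0 nat" assume "a \<in> Poly_Mapping.keys (x * y)"
  then obtain b c where "a = b + c" "b \<in> Poly_Mapping.keys x" "c \<in> Poly_Mapping.keys y"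
    using keys_mult[of x y] by blast
  then show "Poly_Mapping.keys a \<subseteq> Idx n" using x y keys_add[of b c] unfolding Rn_def by blast
qed

lemma Rn_subr: "subr (Rn n :: 'k::field mpoly set)"
  apply (rule subr.intro)
  apply (auto simp: Rn_def)[2]
  apply (rule Rn_add, assumption+)
  apply (rule Rn_mul, assumption+)
  apply (auto simp: Rn_def)
  done

lemma monom_Rn: "Poly_Mapping.keys a \<subseteq> Idx n \<Longrightarrow> (monom a :: 'k::field mpoly) \<in> Rn n"
  by (simp add: Rn_def monom_def)

lemma monom_mult: "(monom a :: 'k::field mpoly) * monom b = monom (a + b)"
  by (simp add: monom_def mult_single)

lemma var_monom: "(var i j :: 'k::field mpoly) = monom (Poly_Mapping.single (cpair i j) 1)"
  by (simp add: var_def monom_def)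

lemma var_sq: "(var i j :: 'k::field mpoly) ^ 2 = monom (Poly_Mapping.single (cpair i j) 2)"
  by (simp only: power2_eq_square var_monom monom_mult single_add[symmetric] one_add_one)

lemma J_add: "x \<in> Jn n \<Longrightarrow> y \<in> Jn n \<Longrightarrow> (x::'k::field mpoly) + y \<in> Jn n"
  unfolding Jn_def by (rule subr.ig_add[OF Rn_subr])
lemma J_diff: "x \<in> Jn n \<Longrightarrow> y \<in> Jn n \<Longrightarrow> (x::'k::field mpoly) - y \<in> Jn n"
  unfolding Jn_def by (rule subr.ig_diff[OF Rn_subr])
lemma J_neg: "x \<in> Jn n \<Longrightarrow> - (x::'k::field mpoly) \<in> Jn n"
  unfolding Jn_def by (rule subr.ig_neg[OF Rn_subr])
lemma J_mul: "r \<in> Rn n \<Longrightarrow> x \<in> Jn n \<Longrightarrow> r * (x::'k::field mpoly) \<in> Jn n"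
  unfolding Jn_def by (rule subr.ig_mul[OF Rn_subr])
lemma J_zero: "(0::'k::field mpoly) \<in> Jn n"
  unfolding Jn_def by (rule subr.ig_zero[OF Rn_subr])
lemma J_gen: "i \<in> {1..n} \<Longrightarrow> j \<in> {1..n} \<Longrightarrow> (var i i * var j j - var i j ^ 2 :: 'k::field mpoly) \<in> Jn n"
  unfolding Jn_def by (rule subr.ig_gen[OF Rn_subr]) blast

lemma finite_Idx: "finite (Idx n)"
  by (rule finite_subset[of _ "{1..n} \<times> {1..n}"]) (auto simp: Idx_def)

lemma cpair_Idx: "i \<in> {1..n} \<Longrightarrow> j \<in> {1..n} \<Longrightarrow> cpair i j \<in> Idx n"
  by (auto simp: cpair_def Idx_def)

lemma step:
  assumes p: "p \<in> Idx n" "fst p \<noteq> snd p" and c: "Poly_Mapping.keys c \<subseteq> Idx n"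
  shows "(monom (c + Poly_Mapping.single p 2) - monom (c + Poly_Mapping.single (fst p, fst p) 1
           + Poly_Mapping.single (snd p, snd p) 1) :: 'k::field mpoly) \<in> Jn n"
proof -
  obtain i j where ij: "p = (i, j)" "1 \<le> i" "i < j" "j \<le> n" using p by (cases p) (auto simp: Idx_def)
  have cp: "cpair i j = p" "cpair i i = (i,i)" "cpair j j = (j,j)" using ij by (auto simp: cpair_def)
  have g: "(var i i * var j j - var i j ^ 2 :: 'k mpoly) \<in> Jn n" using ij by (intro J_gen) auto
  have "(monom c :: 'k mpoly) * (var i i * var j j - var i j ^ 2) \<in> Jn n"
    using g monom_Rn[OF c] by (intro J_mul)
  moreover have "(monom c :: 'k mpoly) * (var i i * var j j - var i j ^ 2) =
     monom (c + Poly_Mapping.single (fst p, fst p) 1 + Poly_Mapping.single (snd p, snd p) 1)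
     - monom (c + Poly_Mapping.single p 2)"
    unfolding var_sq unfolding var_monom cp right_diff_distrib monom_mult using ij by (simp add: add.assoc)
  ultimately show ?thesis using J_neg by fastforce
qed

definition deg :: "nat \<Rightarrow> nat \<times> nat \<Rightarrow> nat" where
  "deg k p = (if fst p = k then 1 else 0) + (if snd p = k then 1 else 0)"
definition wt :: "nat \<Rightarrow> ((nat \<times> nat) \<Rightarrow>\<^sub>0 nat) \<Rightarrow> nat \<Rightarrow> nat" where
  "wt n a k = (\<Sum>p\<in>Idx n. Poly_Mapping.lookup a p * deg k p)"
definition offd :: "nat \<Rightarrow> ((nat \<times> nat) \<Rightarrow>\<^sub>0 nat) \<Rightarrow> nat" where
  "offd n a = (\<Sum>p\<in>Idx n. if fst p \<noteq> snd p then Poly_Mapping.lookup a p else 0)"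
definition evo :: "((nat \<times> nat) \<Rightarrow>\<^sub>0 nat) \<Rightarrow> bool" where
  "evo a = (\<forall>p. fst p \<noteq> snd p \<longrightarrow> even (Poly_Mapping.lookup a p))"

lemma wt_add: "wt n (x + y) k = wt n x k + wt n y k"
  by (simp add: wt_def lookup_add sum.distrib distrib_right)
lemma offd_add: "offd n (x + y) = offd n x + offd n y"
  by (auto simp: offd_def lookup_add sum.distrib[symmetric] intro!: sum.cong)
lemma wt_single: assumes "q \<in> Idx n" shows "wt n (Poly_Mapping.single q m) k = m * deg k q"
proof -
  have "wt n (Poly_Mapping.single q m) k = (\<Sum>p\<in>Idx n. if p = q then m * deg k q else 0)"
    unfolding wt_def by (rule sum.cong) (auto simp: lookup_single when_def)
  then show ?thesis using assms finite_Idx by simp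
qed
lemma offd_single: assumes "q \<in> Idx n" shows "offd n (Poly_Mapping.single q m) = (if fst q \<noteq> snd q then m else 0)"
proof -
  have "offd n (Poly_Mapping.single q m) = (\<Sum>p\<in>Idx n. if p = q then (if fst q \<noteq> snd q then m else 0) else 0)"
    unfolding offd_def by (rule sum.cong) (auto simp: lookup_single when_def)
  then show ?thesis using assms finite_Idx by simp
qed



lemma deg_diag: "deg k (i, i) = (if i = k then 2 else 0)" by (simp add: deg_def)

lemma reduce:
  assumes pos: "offd n a > 0" and KI: "Poly_Mapping.keys a \<subseteq> Idx n" and ev: "evo a"
  shows "\<exists>a'. Poly_Mapping.keys a' \<subseteq> Idx n \<and> evo a' \<and> wt n a' = wt n a \<and> offd n a' < offd n a
          \<and> (monom a - monom a' :: 'k::field mpoly) \<in> Jn n"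
proof -
  obtain p where p: "p \<in> Idx n" "fst p \<noteq> snd p" "Poly_Mapping.lookup a p \<noteq> 0"
  proof (rule ccontr)
    assume "\<not> thesis"
    then have "\<forall>p\<in>Idx n. (if fst p \<noteq> snd p then Poly_Mapping.lookup a p else 0) = 0" using that by auto
    then have "offd n a = 0" unfolding offd_def by simp
    then show False using pos by simp
  qed
  have ge2: "Poly_Mapping.lookup a p \<ge> 2" using p ev unfolding evo_def
    by (metis One_nat_def Suc_1 dvd_refl even_Suc le_less_Suc_eq not_less_eq_eq odd_one le0 le_antisym)
  obtain i j where ij: "p = (i, j)" by (cases p)
  have ii: "(i, i) \<in> Idx n" "(j, j) \<in> Idx n" using p(1) ij by (auto simp: Idx_def)
  define c where "c = a - Poly_Mapping.single p 2"
  have lc: "Poly_Mapping.lookup c q = Poly_Mapping.lookup a q - (if q = p then 2 else 0)" for q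
    by (simp add: c_def lookup_minus lookup_single when_def)
  have ac: "a = c + Poly_Mapping.single p 2"
    by (rule poly_mapping_eqI) (use ge2 in \<open>auto simp: lc lookup_add lookup_single when_def\<close>)
  have KIc: "Poly_Mapping.keys c \<subseteq> Idx n"
  proof
    fix q assume "q \<in> Poly_Mapping.keys c"
    then have "Poly_Mapping.lookup a q \<noteq> 0" by (auto simp: in_keys_iff lc)
    then show "q \<in> Idx n" using KI by (auto simp: in_keys_iff)
  qed
  define a' where "a' = c + Poly_Mapping.single (fst p, fst p) 1 + Poly_Mapping.single (snd p, snd p) 1"
  have "Poly_Mapping.keys a' \<subseteq> Idx n"
    unfolding a'_def using KIc ii ij
    by (auto dest!: set_mp[OF keys_add] split: if_splits)
  moreover have "evo a'"
    unfolding evo_def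
  proof (intro allI impI)
    fix q :: "nat \<times> nat" assume q: "fst q \<noteq> snd q"
    have "Poly_Mapping.lookup a' q = Poly_Mapping.lookup c q"
      using q by (auto simp: a'_def lookup_add lookup_single when_def)
    have ea: "even (Poly_Mapping.lookup a q)" using ev q unfolding evo_def by blast
    have "even (Poly_Mapping.lookup c q)"
      unfolding lc using ea by (cases "q = p") (auto intro: dvd_diff_nat)
    then show "even (Poly_Mapping.lookup a' q)" using \<open>Poly_Mapping.lookup a' q = _\<close> by simp
  qed
  moreover have "wt n a' = wt n a"
  proof
    fix k
    show "wt n a' k = wt n a k"
      unfolding a'_def ac wt_add using ii ij p(1)
      by (simp add: wt_single deg_def)
  qed
  moreover have "offd n a' < offd n a"
    unfolding a'_def ac offd_add using ii ij p by (simp add: offd_single)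
  moreover have "(monom a - monom a' :: 'k::field mpoly) \<in> Jn n"
    unfolding a'_def ac using step[OF p(1,2) KIc] .
  ultimately show ?thesis by blast
qed

lemma base:
  assumes "offd n a = 0" "Poly_Mapping.keys a \<subseteq> Idx n" "offd n b = 0" "Poly_Mapping.keys b \<subseteq> Idx n"
    and w: "wt n a = wt n b"
  shows "a = b"
proof -
  have off: "Poly_Mapping.lookup x q = 0"
    if "offd n x = 0" "q \<in> Idx n" "fst q \<noteq> snd q" for x q
    using that finite_Idx unfolding offd_def
    by (metis (mono_tags, lifting) sum_eq_0_iff)
  have wtd: "wt n x k = 2 * Poly_Mapping.lookup x (k, k)"
    if "offd n x = 0" "(k, k) \<in> Idx n" for x k
  proof -
    have "wt n x k = (\<Sum>p\<in>Idx n. if p = (k, k) then 2 * Poly_Mapping.lookup x (k, k) else 0)"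
      unfolding wt_def
    proof (rule sum.cong)
      fix p assume p: "p \<in> Idx n"
      show "Poly_Mapping.lookup x p * deg k p = (if p = (k, k) then 2 * Poly_Mapping.lookup x (k, k) else 0)"
      proof (cases "fst p = snd p")
        case True then show ?thesis by (cases p) (auto simp: deg_def)
      next
        case False then show ?thesis using off[OF that(1) p] by auto
      qed
    qed simp
    then show ?thesis using that(2) finite_Idx by simp
  qed
  show ?thesis
  proof (rule poly_mapping_eqI)
    fix q
    show "Poly_Mapping.lookup a q = Poly_Mapping.lookup b q"
    proof (cases "q \<in> Idx n")
      case False
      then have "q \<notin> Poly_Mapping.keys a" "q \<notin> Poly_Mapping.keys b" using assms(2,4) by blast+
      then show ?thesis by (simp add: in_keys_iff)
    next
      case True
      show ?thesis
      proof (cases "fst q = snd q")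
        case False then show ?thesis using off True assms(1,3) by simp
      next
        case d: True
        obtain k where q: "q = (k, k)" using d by (cases q) auto
        show ?thesis using wtd[of a k] wtd[of b k] assms(1,3) True w q by simp
      qed
    qed
  qed
qed

lemma main_ind:
  "\<forall>a b. offd n a + offd n b = m \<longrightarrow> Poly_Mapping.keys a \<subseteq> Idx n \<longrightarrow> Poly_Mapping.keys b \<subseteq> Idx n
     \<longrightarrow> evo a \<longrightarrow> evo b \<longrightarrow> wt n a = wt n b \<longrightarrow> (monom a - monom b :: 'k::field mpoly) \<in> Jn n"
proof (induction m rule: less_induct)
  case (less m)
  show ?case
  proof (intro allI impI)
    fix a b :: "(nat \<times> nat) \<Rightarrow>\<^sub>0 nat"
    assume h: "offd n a + offd n b = m" "Poly_Mapping.keys a \<subseteq> Idx n" "Poly_Mapping.keys b \<subseteq> Idx n"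
      "evo a" "evo b" "wt n a = wt n b"
    show "(monom a - monom b :: 'k mpoly) \<in> Jn n"
    proof (cases "offd n a > 0")
      case True
      obtain a' where a': "Poly_Mapping.keys a' \<subseteq> Idx n" "evo a'" "wt n a' = wt n a" "offd n a' < offd n a"
        "(monom a - monom a' :: 'k::field mpoly) \<in> Jn n"
        using reduce[OF True h(2,4)] by blast
      have "(monom a' - monom b :: 'k mpoly) \<in> Jn n"
        using less.IH[of "offd n a' + offd n b"] a' h by auto
      then have "(monom a - monom a') + (monom a' - monom b :: 'k mpoly) \<in> Jn n"
        using a'(5) by (rule J_add[rotated])
      then show ?thesis by simp
    next
      case F: False
      show ?thesis
      proof (cases "offd n b > 0")
        case True
        obtain b' where b': "Poly_Mapping.keys b' \<subseteq> Idx n" "evo b'" "wt n b' = wt n b" "offd n b' < offd n b"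
          "(monom b - monom b' :: 'k::field mpoly) \<in> Jn n"
          using reduce[OF True h(3,5)] by blast
        have "(monom a - monom b' :: 'k mpoly) \<in> Jn n"
          using less.IH[of "offd n a + offd n b'"] b' h by auto
        then have "(monom a - monom b') - (monom b - monom b' :: 'k mpoly) \<in> Jn n"
          using b'(5) by (rule J_diff)
        then show ?thesis by simp
      next
        case False
        then have "a = b" using F h by (intro base) auto
        then show ?thesis using J_zero by simp
      qed
    qed
  qed
qed

lemma main:
  "Poly_Mapping.keys a \<subseteq> Idx n \<Longrightarrow> Poly_Mapping.keys b \<subseteq> Idx n \<Longrightarrow> evo a \<Longrightarrow> evo b
   \<Longrightarrow> wt n a = wt n b \<Longrightarrow> (monom a - monom b :: 'k::field mpoly) \<in> Jn n"
  using main_ind by blast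



lemma cpair_sym: "cpair i j = cpair j i" by (simp add: cpair_def min.commute max.commute)

lemma br_supp: "i \<in> {1..n} \<Longrightarrow> j \<in> {1..n} \<Longrightarrow> p \<notin> Idx n \<Longrightarrow> bracket i j i j p = 0"
  using cpair_Idx[of i n i] cpair_Idx[of j n j] cpair_Idx[of i n j] cpair_Idx[of j n i]
  by (auto simp: bracket_def evec_def)

lemma evec_sym: "evec j i = evec i j" by (simp add: evec_def cpair_sym)
lemma evec_diag: "fst p \<noteq> snd p \<Longrightarrow> evec i i p = 0" by (auto simp: evec_def cpair_def)
lemma br_off: "fst p \<noteq> snd p \<Longrightarrow> bracket i j i j p = -2 * evec i j p"
  unfolding bracket_def evec_sym[of j i] by (simp add: evec_diag)

lemma deg_cpair: "deg k (cpair i j) = (if i = k then 1 else 0) + (if j = k then 1 else 0)"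
  by (auto simp: deg_def cpair_def min_def max_def)

lemma evec_wt: assumes "i \<in> {1..n}" "j \<in> {1..n}"
  shows "(\<Sum>p\<in>Idx n. evec i j p * int (deg k p)) = int (deg k (cpair i j))"
proof -
  have "(\<Sum>p\<in>Idx n. evec i j p * int (deg k p)) = (\<Sum>p\<in>Idx n. if p = cpair i j then int (deg k (cpair i j)) else 0)"
    by (rule sum.cong) (auto simp: evec_def)
  then show ?thesis using cpair_Idx[OF assms] finite_Idx by simp
qed

lemma br_wt: assumes "i \<in> {1..n}" "j \<in> {1..n}"
  shows "(\<Sum>p\<in>Idx n. bracket i j i j p * int (deg k p)) = 0"
proof -
  have "(\<Sum>p\<in>Idx n. bracket i j i j p * int (deg k p)) =
     (\<Sum>p\<in>Idx n. evec i i p * int (deg k p)) + (\<Sum>p\<in>Idx n. evec j j p * int (deg k p))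
     - (\<Sum>p\<in>Idx n. evec i j p * int (deg k p)) - (\<Sum>p\<in>Idx n. evec j i p * int (deg k p))"
    unfolding bracket_def left_diff_distrib distrib_right sum.distrib sum_subtractf ..
  also have "\<dots> = 0" using assms by (simp add: evec_wt deg_cpair)
  finally show ?thesis .
qed

lemma Lp_props:
  assumes "u \<in> Lprime n"
  shows "\<And>p. p \<notin> Idx n \<Longrightarrow> u p = 0"
    and "\<And>p. fst p \<noteq> snd p \<Longrightarrow> even (u p)"
    and "\<And>k. (\<Sum>p\<in>Idx n. u p * int (deg k p)) = 0"
proof -
  obtain c where u: "u = (\<lambda>p. \<Sum>q\<in>{1..n} \<times> {1..n}. c q * bracket (fst q) (snd q) (fst q) (snd q) p)"
    using assms unfolding Lprime_def by blast
  show "u p = 0" if "p \<notin> Idx n" for p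
    unfolding u using that by (auto intro!: sum.neutral simp: br_supp)
  show "even (u p)" if "fst p \<noteq> snd p" for p
    unfolding u using that by (auto intro!: dvd_sum simp: br_off)
  show "(\<Sum>p\<in>Idx n. u p * int (deg k p)) = 0" for k
  proof -
    have "(\<Sum>p\<in>Idx n. u p * int (deg k p)) =
      (\<Sum>q\<in>{1..n} \<times> {1..n}. c q * (\<Sum>p\<in>Idx n. bracket (fst q) (snd q) (fst q) (snd q) p * int (deg k p)))"
    proof -
      have "(\<Sum>p\<in>Idx n. u p * int (deg k p)) = (\<Sum>p\<in>Idx n. \<Sum>q\<in>{1..n} \<times> {1..n}.
          c q * (bracket (fst q) (snd q) (fst q) (snd q) p * int (deg k p)))"
        unfolding u sum_distrib_right mult.assoc ..
      also have "\<dots> = (\<Sum>q\<in>{1..n} \<times> {1..n}. \<Sum>p\<in>Idx n.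
          c q * (bracket (fst q) (snd q) (fst q) (snd q) p * int (deg k p)))"
        by (rule sum.swap)
      also have "\<dots> = (\<Sum>q\<in>{1..n} \<times> {1..n}. c q * (\<Sum>p\<in>Idx n. bracket (fst q) (snd q) (fst q) (snd q) p * int (deg k p)))"
        unfolding sum_distrib_left ..
      finally show ?thesis .
    qed
    also have "\<dots> = 0" by (auto intro!: sum.neutral simp: br_wt)
    finally show ?thesis .
  qed
qed

lemma lookup_posp: assumes "u \<in> Lprime n" shows "Poly_Mapping.lookup (posp u) = (\<lambda>p. nat (u p))"
proof -
  have "finite {p. nat (u p) \<noteq> 0}"
    by (rule finite_subset[OF _ finite_Idx[of n]]) (use Lp_props(1)[OF assms] in fastforce)
  then show ?thesis unfolding posp_def by simp
qed

lemma lookup_negp: assumes "u \<in> Lprime n" shows "Poly_Mapping.lookup (negp u) = (\<lambda>p. nat (- u p))"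
proof -
  have "finite {p. nat (- u p) \<noteq> 0}"
    by (rule finite_subset[OF _ finite_Idx[of n]]) (use Lp_props(1)[OF assms] in fastforce)
  then show ?thesis unfolding negp_def by simp
qed

lemma nat_minus_helper: "int (nat x) - int (nat (- x)) = x" by simp

lemma even_nat_int: "even (x::int) \<Longrightarrow> even (nat x)"
  by (cases "x \<ge> 0") (auto simp: even_nat_iff)

lemma lattice_in_J:
  assumes u: "u \<in> Lprime n"
  shows "(monom (posp u) - monom (negp u) :: 'k::field mpoly) \<in> Jn n"
proof (rule main)
  show "Poly_Mapping.keys (posp u) \<subseteq> Idx n" "Poly_Mapping.keys (negp u) \<subseteq> Idx n"
    using Lp_props(1)[OF u] by (auto simp: in_keys_iff lookup_posp[OF u] lookup_negp[OF u]) (metis order_refl)+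
  show "evo (posp u)"
    unfolding evo_def lookup_posp[OF u] using Lp_props(2)[OF u] even_nat_int by blast
  show "evo (negp u)"
    unfolding evo_def lookup_negp[OF u] using Lp_props(2)[OF u] even_nat_int even_minus by metis
  show "wt n (posp u) = wt n (negp u)"
  proof
    fix k
    have a: "int (wt n (posp u) k) = (\<Sum>p\<in>Idx n. int (nat (u p)) * int (deg k p))"
      unfolding wt_def lookup_posp[OF u] of_nat_sum of_nat_mult ..
    have b: "int (wt n (negp u) k) = (\<Sum>p\<in>Idx n. int (nat (- u p)) * int (deg k p))"
      unfolding wt_def lookup_negp[OF u] of_nat_sum of_nat_mult ..
    have "int (wt n (posp u) k) - int (wt n (negp u) k) =
      (\<Sum>p\<in>Idx n. (int (nat (u p)) - int (nat (- u p))) * int (deg k p))"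
      unfolding a b sum_subtractf[symmetric] left_diff_distrib ..
    also have "\<dots> = (\<Sum>p\<in>Idx n. u p * int (deg k p))"
      by (rule sum.cong) (simp_all add: nat_minus_helper)
    also have "\<dots> = 0" by (rule Lp_props(3)[OF u])
    finally show "wt n (posp u) k = wt n (negp u) k" by simp
  qed
qed

lemma gen_in_lattice:
  assumes ij: "i \<in> {1..n}" "j \<in> {1..n}"
  shows "(var i i * var j j - var i j ^ 2 :: 'k::field mpoly) \<in> lattice_ideal n (Lprime n)"
proof (cases "i = j")
  case True
  have z: "(var i i * var j j - var i j ^ 2 :: 'k mpoly) = 0" using True by (simp add: power2_eq_square)
  show ?thesis unfolding lattice_ideal_def z by (rule subr.ig_zero[OF Rn_subr])
next
  case False
  define u where "u = bracket i j i j"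
  have uL: "u \<in> Lprime n"
  proof -
    have "u = (\<lambda>p. \<Sum>q\<in>{1..n} \<times> {1..n}. (if q = (i, j) then 1 else 0) * bracket (fst q) (snd q) (fst q) (snd q) p)"
    proof
      fix p
      have "(\<Sum>q\<in>{1..n} \<times> {1..n}. (if q = (i, j) then 1 else 0) * bracket (fst q) (snd q) (fst q) (snd q) p)
          = (\<Sum>q\<in>{1..n} \<times> {1..n}. if q = (i, j) then bracket i j i j p else 0)"
        by (rule sum.cong) auto
      also have "\<dots> = bracket i j i j p" using ij by simp
      finally show "u p = (\<Sum>q\<in>{1..n} \<times> {1..n}. (if q = (i, j) then 1 else 0) * bracket (fst q) (snd q) (fst q) (snd q) p)"
        unfolding u_def by simp
    qed
    then show ?thesis unfolding Lprime_def
      by (intro CollectI exI[of _ "\<lambda>q. if q = (i, j) then 1 else 0"]) simp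
  qed
  have d: "cpair i i \<noteq> cpair j j" "cpair i i \<noteq> cpair i j" "cpair j j \<noteq> cpair i j"
    using False by (auto simp: cpair_def min_def max_def)
  have uv: "u p = (if p = cpair i i then 1 else 0) + (if p = cpair j j then 1 else 0) - (if p = cpair i j then 2 else 0)" for p
    unfolding u_def bracket_def evec_sym[of j i] by (simp add: evec_def)
  have pp: "posp u = Poly_Mapping.single (cpair i i) 1 + Poly_Mapping.single (cpair j j) 1"
    by (rule poly_mapping_eqI) (use d in \<open>auto simp: lookup_posp[OF uL] uv lookup_add lookup_single when_def\<close>)
  have nn: "negp u = Poly_Mapping.single (cpair i j) 2"
    by (rule poly_mapping_eqI) (use d in \<open>auto simp: lookup_negp[OF uL] uv lookup_single when_def\<close>)
  have eq: "(var i i * var j j - var i j ^ 2 :: 'k mpoly) = monom (posp u) - monom (negp u)"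
    unfolding pp nn var_sq unfolding var_monom monom_mult ..
  show ?thesis unfolding lattice_ideal_def eq
    by (rule subr.ig_gen[OF Rn_subr]) (use uL in blast)
qed

theorem proposition2p4:
  assumes "n \<ge> 2"
  shows "(Jn n :: 'k::field mpoly set) = lattice_ideal n (Lprime n)"
proof
  show "(Jn n :: 'k::field mpoly set) \<subseteq> lattice_ideal n (Lprime n)"
    unfolding Jn_def lattice_ideal_def
    apply (rule subr.ig_sub[OF Rn_subr])
    using gen_in_lattice[where 'k='k, of _ n _, unfolded lattice_ideal_def] by blast
  show "lattice_ideal n (Lprime n) \<subseteq> (Jn n :: 'k::field mpoly set)"
    unfolding lattice_ideal_def Jn_def
    apply (rule subr.ig_sub[OF Rn_subr])
    using lattice_in_J[where 'k='k, unfolded Jn_def] by blast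
qed


end
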